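(* Let $G$ be a cograph and let $\sigma$ be a greedy coloring of $G$ with color set $\{1,2,\dots,\chi(G)\}$ ordered naturally. Let $G_1=(V_1,E_1)$ be a connected component of $G$. Then $\sigma(V_1)=\{1,\dots,\chi(G_1)\}$.
   Context: All graphs are finite, simple and undirected; $\chi(G)$ is the chromatic number. A cograph is a graph that is $K_1$, or a disjoint union of cographs, or a join of cographs. A greedy coloring of $G$ with ordered color set $1<2<\dots$ is obtained by processing the vertices of $G$ in some order and assigning to each vertex the smallest color not already assigned to one of its previously processed neighbors. (For cographs, every greedy coloring uses exactly $\chi(G)$ colors.) *)

theory Defs
  imports Main
begin

text \<open>A finite simple graph is given by a vertex set V and a set E of edges,
  each edge being a 2-element subset of V.\<close>

definition adj :: "'a set set \<Rightarrow> 'a \<Rightarrow> 'a \<Rightarrow> bool" where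
  "adj E x y \<longleftrightarrow> {x, y} \<in> E"

inductive cograph :: "'a set \<Rightarrow> 'a set set \<Rightarrow> bool" where
  K1: "cograph {v} {}"
| union: "\<lbrakk>cograph V1 E1; cograph V2 E2; V1 \<inter> V2 = {}\<rbrakk>
          \<Longrightarrow> cograph (V1 \<union> V2) (E1 \<union> E2)"
| join: "\<lbrakk>cograph V1 E1; cograph V2 E2; V1 \<inter> V2 = {}\<rbrakk>
          \<Longrightarrow> cograph (V1 \<union> V2) (E1 \<union> E2 \<union> {{x, y} | x y. x \<in> V1 \<and> y \<in> V2})"

definition proper_coloring :: "'a set \<Rightarrow> 'a set set \<Rightarrow> ('a \<Rightarrow> nat) \<Rightarrow> bool" where
  "proper_coloring V E f \<longleftrightarrow> (\<forall>x\<in>V. \<forall>y\<in>V. adj E x y \<longrightarrow> f x \<noteq> f y)"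

definition chromatic_number :: "'a set \<Rightarrow> 'a set set \<Rightarrow> nat" where
  "chromatic_number V E =
     (LEAST k. \<exists>f. proper_coloring V E f \<and> f ` V \<subseteq> {1..k})"

definition greedy_coloring_by :: "'a set \<Rightarrow> 'a set set \<Rightarrow> 'a list \<Rightarrow> ('a \<Rightarrow> nat) \<Rightarrow> bool" where
  "greedy_coloring_by V E vs \<sigma> \<longleftrightarrow>
     distinct vs \<and> set vs = V \<and>
     (\<forall>i < length vs. \<sigma> (vs ! i) =
        (LEAST c. 1 \<le> c \<and> c \<notin> {\<sigma> (vs ! j) | j. j < i \<and> adj E (vs ! j) (vs ! i)}))"

definition greedy_coloring :: "'a set \<Rightarrow> 'a set set \<Rightarrow> ('a \<Rightarrow> nat) \<Rightarrow> bool" where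
  "greedy_coloring V E \<sigma> \<longleftrightarrow> (\<exists>vs. greedy_coloring_by V E vs \<sigma>)"

definition component :: "'a set \<Rightarrow> 'a set set \<Rightarrow> 'a set \<Rightarrow> bool" where
  "component V E V1 \<longleftrightarrow>
     (\<exists>x\<in>V. V1 = {y \<in> V. (\<lambda>u w. u \<in> V \<and> w \<in> V \<and> adj E u w)\<^sup>*\<^sup>* x y})"

definition induced_edges :: "'a set set \<Rightarrow> 'a set \<Rightarrow> 'a set set" where
  "induced_edges E V1 = {e \<in> E. e \<subseteq> V1}"

end

theory Submission
  imports Defs
begin

definition wg :: "'a set \<Rightarrow> 'a set set \<Rightarrow> ('a \<Rightarrow> nat) \<Rightarrow> bool" where
  "wg W E s \<longleftrightarrow> proper_coloring W E s \<and>
     (\<forall>v\<in>W. \<forall>c\<in>s ` W. c < s v \<longrightarrow> (\<exists>u\<in>W. adj E v u \<and> s u = c))"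

lemma cograph_finite: "cograph V E \<Longrightarrow> finite V"
  by (induction rule: cograph.induct) auto

lemma cograph_edges: "cograph V E \<Longrightarrow> e \<in> E \<Longrightarrow> e \<subseteq> V \<and> card e = 2"
  by (induction arbitrary: e rule: cograph.induct) (auto simp: card_insert_if)

lemma adj_sym: "adj E x y = adj E y x"
  unfolding adj_def by (simp add: insert_commute)

lemma key:
  assumes "cograph V E"
  shows "W \<subseteq> V \<Longrightarrow> wg W E s \<Longrightarrow> proper_coloring W E f \<Longrightarrow> card (s ` W) \<le> card (f ` W)"
  using assms
proof (induction arbitrary: W s f rule: cograph.induct)
  case (K1 v)
  then have "W = {} \<or> W = {v}" by auto
  then show ?case by auto
next
  case (union V1 E1 V2 E2)
  define W1 where "W1 = W \<inter> V1"
  define W2 where "W2 = W \<inter> V2"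
  have W: "W = W1 \<union> W2" using union.prems W1_def W2_def by auto
  have fin: "finite W1" "finite W2"
    using cograph_finite[OF union.hyps(1)] cograph_finite[OF union.hyps(2)] W1_def W2_def by auto
  have e1: "\<And>e. e \<in> E1 \<Longrightarrow> e \<subseteq> V1" using cograph_edges[OF union.hyps(1)] by blast
  have e2: "\<And>e. e \<in> E2 \<Longrightarrow> e \<subseteq> V2" using cograph_edges[OF union.hyps(2)] by blast
  have adjU: "\<And>x y. adj (E1 \<union> E2) x y \<longleftrightarrow> adj E1 x y \<or> adj E2 x y" unfolding adj_def by auto
  have adj1: "\<And>x y. adj E1 x y \<Longrightarrow> x \<in> V1 \<and> y \<in> V1" using e1 unfolding adj_def by auto
  have adj2: "\<And>x y. adj E2 x y \<Longrightarrow> x \<in> V2 \<and> y \<in> V2" using e2 unfolding adj_def by auto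
  have wg1: "wg W1 E1 s"
    unfolding wg_def
  proof (intro conjI ballI impI)
    show "proper_coloring W1 E1 s" using union.prems(2) unfolding wg_def proper_coloring_def W
      using adjU by blast
  next
    fix v c assume v: "v \<in> W1" and c: "c \<in> s ` W1" "c < s v"
    then obtain u where u: "u \<in> W" "adj (E1 \<union> E2) v u" "s u = c"
      using union.prems(2) unfolding wg_def W by blast
    then have "adj E1 v u" using adjU adj2 v union.hyps(3) W1_def by blast
    then show "\<exists>u\<in>W1. adj E1 v u \<and> s u = c" using u adj1 W1_def by blast
  qed
  have wg2: "wg W2 E2 s"
    unfolding wg_def
  proof (intro conjI ballI impI)
    show "proper_coloring W2 E2 s" using union.prems(2) unfolding wg_def proper_coloring_def W
      using adjU by blast
  next
    fix v c assume v: "v \<in> W2" and c: "c \<in> s ` W2" "c < s v"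
    then obtain u where u: "u \<in> W" "adj (E1 \<union> E2) v u" "s u = c"
      using union.prems(2) unfolding wg_def W by blast
    then have "adj E2 v u" using adjU adj1 v union.hyps(3) W2_def by blast
    then show "\<exists>u\<in>W2. adj E2 v u \<and> s u = c" using u adj2 W2_def by blast
  qed
  have pf1: "proper_coloring W1 E1 f" using union.prems(3) unfolding proper_coloring_def W
      using adjU by blast
  have pf2: "proper_coloring W2 E2 f" using union.prems(3) unfolding proper_coloring_def W
      using adjU by blast
  have IH1: "card (s ` W1) \<le> card (f ` W1)" using union.IH(1)[OF _ wg1 pf1] W1_def by blast
  have IH2: "card (s ` W2) \<le> card (f ` W2)" using union.IH(2)[OF _ wg2 pf2] W2_def by blast
  have cont: "s ` W1 \<subseteq> s ` W2 \<or> s ` W2 \<subseteq> s ` W1"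
  proof (rule ccontr)
    assume "\<not> ?thesis"
    then obtain c d where cd: "c \<in> s ` W1" "c \<notin> s ` W2" "d \<in> s ` W2" "d \<notin> s ` W1" by blast
    show False
    proof (cases "c < d")
      case True
      from cd(3) obtain w where w: "w \<in> W2" "s w = d" by blast
      have "c \<in> s ` W" using cd(1) W by blast
      then obtain u where u: "u \<in> W" "adj (E1 \<union> E2) w u" "s u = c"
        using union.prems(2) True w W unfolding wg_def by blast
      then have "u \<in> W2" using adjU adj1 adj2 w union.hyps(3) W1_def W2_def W by blast
      then show False using cd u by (metis imageI)
    next
      case False
      then have "d < c" using cd by (metis linorder_neqE_nat)
      from cd(1) obtain w where w: "w \<in> W1" "s w = c" by blast
      have "d \<in> s ` W" using cd(3) W by blast
      then obtain u where u: "u \<in> W" "adj (E1 \<union> E2) w u" "s u = d"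
        using union.prems(2) \<open>d < c\<close> w W unfolding wg_def by blast
      then have "u \<in> W1" using adjU adj1 adj2 w union.hyps(3) W1_def W2_def W by blast
      then show False using cd u by (metis imageI)
    qed
  qed
  have fU: "card (f ` W1) \<le> card (f ` W)" "card (f ` W2) \<le> card (f ` W)"
    using fin W by (auto intro!: card_mono)
  have "s ` W = s ` W1 \<or> s ` W = s ` W2" using cont W by blast
  then show ?case using IH1 IH2 fU by auto
next
  case (join V1 E1 V2 E2)
  define W1 where "W1 = W \<inter> V1"
  define W2 where "W2 = W \<inter> V2"
  define C where "C = {{x, y} |x y. x \<in> V1 \<and> y \<in> V2}"
  have W: "W = W1 \<union> W2" using join.prems W1_def W2_def by auto
  have fin: "finite W1" "finite W2"
    using cograph_finite[OF join.hyps(1)] cograph_finite[OF join.hyps(2)] W1_def W2_def by auto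
  have e1: "\<And>e. e \<in> E1 \<Longrightarrow> e \<subseteq> V1" using cograph_edges[OF join.hyps(1)] by blast
  have e2: "\<And>e. e \<in> E2 \<Longrightarrow> e \<subseteq> V2" using cograph_edges[OF join.hyps(2)] by blast
  have adjU: "\<And>x y. adj (E1 \<union> E2 \<union> C) x y \<longleftrightarrow> adj E1 x y \<or> adj E2 x y \<or> {x,y} \<in> C"
    unfolding adj_def by auto
  have adj1: "\<And>x y. adj E1 x y \<Longrightarrow> x \<in> V1 \<and> y \<in> V1" using e1 unfolding adj_def by auto
  have adj2: "\<And>x y. adj E2 x y \<Longrightarrow> x \<in> V2 \<and> y \<in> V2" using e2 unfolding adj_def by auto
  have inC: "\<And>x y. {x,y} \<in> C \<Longrightarrow> (x \<in> V1 \<and> y \<in> V2) \<or> (x \<in> V2 \<and> y \<in> V1)"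
    unfolding C_def by (auto simp: doubleton_eq_iff)
  have cross: "\<And>x y. x \<in> V1 \<Longrightarrow> y \<in> V2 \<Longrightarrow> adj (E1 \<union> E2 \<union> C) x y"
    unfolding adj_def C_def by blast
  note pr = join.prems(2)[unfolded wg_def C_def[symmetric]]
  have disj: "s ` W1 \<inter> s ` W2 = {}"
  proof -
    { fix x y assume "x \<in> W1" "y \<in> W2" "s x = s y"
      then have False using pr cross W W1_def W2_def unfolding proper_coloring_def by blast }
    then show ?thesis by blast
  qed
  have wg1: "wg W1 E1 s"
    unfolding wg_def
  proof (intro conjI ballI impI)
    show "proper_coloring W1 E1 s" using pr unfolding proper_coloring_def W
      using adjU by blast
  next
    fix v c assume v: "v \<in> W1" and c: "c \<in> s ` W1" "c < s v"
    then obtain u where u: "u \<in> W" "adj (E1 \<union> E2 \<union> C) v u" "s u = c"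
      using pr unfolding W by blast
    have "u \<notin> W2" using disj c u by (metis disjoint_iff imageI)
    then have uW1: "u \<in> W1" using u W by blast
    then have "adj E1 v u" using u adjU adj2 inC v join.hyps(3) W1_def by blast
    then show "\<exists>u\<in>W1. adj E1 v u \<and> s u = c" using u uW1 by blast
  qed
  have wg2: "wg W2 E2 s"
    unfolding wg_def
  proof (intro conjI ballI impI)
    show "proper_coloring W2 E2 s" using pr unfolding proper_coloring_def W
      using adjU by blast
  next
    fix v c assume v: "v \<in> W2" and c: "c \<in> s ` W2" "c < s v"
    then obtain u where u: "u \<in> W" "adj (E1 \<union> E2 \<union> C) v u" "s u = c"
      using pr unfolding W by blast
    have "u \<notin> W1" using disj c u by (metis disjoint_iff imageI)
    then have uW2: "u \<in> W2" using u W by blast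
    then have "adj E2 v u" using u adjU adj1 inC v join.hyps(3) W2_def by blast
    then show "\<exists>u\<in>W2. adj E2 v u \<and> s u = c" using u uW2 by blast
  qed
  note pf = join.prems(3)[unfolded C_def[symmetric]]
  have pf1: "proper_coloring W1 E1 f" using pf unfolding proper_coloring_def W
      using adjU by blast
  have pf2: "proper_coloring W2 E2 f" using pf unfolding proper_coloring_def W
      using adjU by blast
  have IH1: "card (s ` W1) \<le> card (f ` W1)" using join.IH(1)[OF _ wg1 pf1] W1_def by blast
  have IH2: "card (s ` W2) \<le> card (f ` W2)" using join.IH(2)[OF _ wg2 pf2] W2_def by blast
  have fdisj: "f ` W1 \<inter> f ` W2 = {}"
  proof -
    { fix x y assume "x \<in> W1" "y \<in> W2" "f x = f y"
      then have False using pf cross W W1_def W2_def unfolding proper_coloring_def by blast }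
    then show ?thesis by blast
  qed
  have "card (s ` W) = card (s ` W1) + card (s ` W2)"
    using W disj fin by (simp add: image_Un card_Un_disjoint)
  moreover have "card (f ` W) = card (f ` W1) + card (f ` W2)"
    using W fdisj fin by (simp add: image_Un card_Un_disjoint)
  ultimately show ?case using IH1 IH2 by simp
qed


lemma least_props:
  fixes X :: "nat set"
  assumes "finite X" and "t = (LEAST c. 1 \<le> c \<and> c \<notin> X)"
  shows "1 \<le> t" "t \<notin> X" "\<And>c. 1 \<le> c \<Longrightarrow> c < t \<Longrightarrow> c \<in> X"
proof -
  obtain c where c: "c \<notin> insert 0 X" using assms(1) ex_new_if_finite[OF infinite_UNIV_nat] by blast
  then have ex: "1 \<le> c \<and> c \<notin> X" by auto
  show "1 \<le> t" "t \<notin> X" using LeastI[of "\<lambda>c. 1 \<le> c \<and> c \<notin> X", OF ex] assms(2) by auto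
  show "\<And>c. 1 \<le> c \<Longrightarrow> c < t \<Longrightarrow> c \<in> X" using not_less_Least assms(2) by blast
qed

lemma idx: "v \<in> set vs \<Longrightarrow> \<exists>i. i < length vs \<and> v = vs ! i"
  by (metis in_set_conv_nth)

lemma greedy_props:
  assumes cg: "cograph V E" and g: "greedy_coloring_by V E vs s"
  shows "proper_coloring V E s"
    and "\<And>v. v \<in> V \<Longrightarrow> 1 \<le> s v"
    and "\<And>v c. v \<in> V \<Longrightarrow> 1 \<le> c \<Longrightarrow> c < s v \<Longrightarrow> \<exists>u\<in>V. adj E v u \<and> s u = c"
proof -
  define X where "X i = {s (vs ! j) | j. j < i \<and> adj E (vs ! j) (vs ! i)}" for i
  have finX: "finite (X i)" for i
  proof -
    have "X i \<subseteq> (\<lambda>j. s (vs ! j)) ` {..<i}" unfolding X_def by auto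
    then show ?thesis using finite_subset by blast
  qed
  have gg: "distinct vs \<and> set vs = V \<and> (\<forall>i < length vs. s (vs ! i) = (LEAST c. 1 \<le> c \<and> c \<notin> X i))"
    using g unfolding greedy_coloring_by_def X_def .
  have d: "distinct vs" and sv: "set vs = V"
    and eq: "\<And>i. i < length vs \<Longrightarrow> s (vs ! i) = (LEAST c. 1 \<le> c \<and> c \<notin> X i)"
    using gg by blast+
  note P = least_props[OF finX eq]
  have noloop: "\<not> adj E x x" for x
    using cograph_edges[OF cg, of "{x}"] unfolding adj_def by auto
  show "proper_coloring V E s"
    unfolding proper_coloring_def
  proof (intro ballI impI)
    fix x y assume xy: "x \<in> V" "y \<in> V" "adj E x y"
    obtain i where i: "i < length vs" "x = vs ! i" using idx[OF xy(1)[folded sv]] by blast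
    obtain j where j: "j < length vs" "y = vs ! j" using idx[OF xy(2)[folded sv]] by blast
    have "i \<noteq> j" using i j xy noloop by blast
    then consider "j < i" | "i < j" by linarith
    then show "s x \<noteq> s y"
    proof cases
      case 1
      have "adj E (vs ! j) (vs ! i)" using xy i j adj_sym[of E x y] by simp
      then have "s y \<in> X i" unfolding X_def using 1 j(2) by blast
      moreover have "s x \<notin> X i" using P(2)[OF i(1)] i(2) by simp
      ultimately show ?thesis by metis
    next
      case 2
      have "adj E (vs ! i) (vs ! j)" using xy i j by simp
      then have "s x \<in> X j" unfolding X_def using 2 i(2) by blast
      moreover have "s y \<notin> X j" using P(2)[OF j(1)] j(2) by simp
      ultimately show ?thesis by metis
    qed
  qed
  show "1 \<le> s v" if "v \<in> V" for v
  proof -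
    have vV: "v \<in> set vs" using that(1) sv by simp
    obtain i where i: "i < length vs" "v = vs ! i" using idx[OF vV] by blast
    show ?thesis using P(1)[OF i(1)] i(2) by simp
  qed
  show "\<exists>u\<in>V. adj E v u \<and> s u = c" if "v \<in> V" "1 \<le> c" "c < s v" for v c
  proof -
    have vV: "v \<in> set vs" using that(1) sv by simp
    obtain i where i: "i < length vs" "v = vs ! i" using idx[OF vV] by blast
    have "c \<in> X i" using P(3)[OF i(1)] that(2,3) i(2) by simp
    then obtain j where "j < i" "adj E (vs ! j) v" "s (vs ! j) = c" unfolding X_def using i by blast
    moreover have "vs ! j \<in> V" using \<open>j < i\<close> i(1) sv nth_mem[of j vs] by simp
    moreover have "adj E v (vs ! j)" using \<open>adj E (vs ! j) v\<close> adj_sym[of E v "vs ! j"] by simp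
    ultimately show ?thesis by blast
  qed
qed

theorem lemma4:
  fixes V :: "'a set" and E :: "'a set set" and \<sigma> :: "'a \<Rightarrow> nat" and V1 :: "'a set"
  assumes "cograph V E"
    and "greedy_coloring V E \<sigma>"
    and "component V E V1"
  shows "\<sigma> ` V1 = {1..chromatic_number V1 (induced_edges E V1)}"
proof -
  obtain vs where g: "greedy_coloring_by V E vs \<sigma>" using assms(2) unfolding greedy_coloring_def by blast
  note G = greedy_props[OF assms(1) g]
  define R where "R = (\<lambda>u w. u \<in> V \<and> w \<in> V \<and> adj E u w)"
  obtain x where x: "x \<in> V" "V1 = {y \<in> V. R\<^sup>*\<^sup>* x y}"
    using assms(3) unfolding component_def R_def by blast
  have sub: "V1 \<subseteq> V" using x by auto
  have xV1: "x \<in> V1" using x by auto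
  have finV1: "finite V1" using sub cograph_finite[OF assms(1)] finite_subset by blast
  have closed: "u \<in> V1" if "v \<in> V1" "u \<in> V" "adj E v u" for u v
  proof -
    have "R\<^sup>*\<^sup>* x v" using that x by auto
    moreover have "R v u" using that sub unfolding R_def by auto
    ultimately have "R\<^sup>*\<^sup>* x u" by (rule rtranclp.rtrancl_into_rtrancl)
    then show ?thesis using x that by auto
  qed
  define EW where "EW = induced_edges E V1"
  have adjW: "adj EW u v \<longleftrightarrow> adj E u v" if "u \<in> V1" "v \<in> V1" for u v
    using that unfolding EW_def induced_edges_def adj_def by auto
  define m where "m = Max (\<sigma> ` V1)"
  have mI: "m \<in> \<sigma> ` V1" unfolding m_def using finV1 xV1 by (intro Max_in) auto
  have img: "\<sigma> ` V1 = {1..m}"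
  proof
    show "\<sigma> ` V1 \<subseteq> {1..m}"
    proof
      fix y assume "y \<in> \<sigma> ` V1"
      then obtain v where v: "v \<in> V1" "y = \<sigma> v" by blast
      have "1 \<le> y" using G(2)[of v] v sub by blast
      moreover have "y \<le> m" unfolding m_def using finV1 v by simp
      ultimately show "y \<in> {1..m}" by simp
    qed
    show "{1..m} \<subseteq> \<sigma> ` V1"
    proof
      fix c assume c: "c \<in> {1..m}"
      obtain w where w: "w \<in> V1" "\<sigma> w = m" using mI by blast
      show "c \<in> \<sigma> ` V1"
      proof (cases "c = m")
        case True then show ?thesis using mI by simp
      next
        case False
        then have "c < \<sigma> w" using c w by auto
        moreover have "1 \<le> c" using c by simp
        moreover have "w \<in> V" using w sub by blast
        ultimately obtain u where "u \<in> V" "adj E w u" "\<sigma> u = c" using G(3)[of w c] by blast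
        then show ?thesis using closed w by (metis imageI)
      qed
    qed
  qed
  have propW: "proper_coloring V1 EW \<sigma>"
    using G(1) sub adjW unfolding proper_coloring_def by blast
  have "chromatic_number V1 EW \<le> m"
    unfolding chromatic_number_def using propW img by (intro Least_le exI[of _ \<sigma>]) simp
  moreover have "m \<le> chromatic_number V1 EW"
  proof -
    let ?k = "chromatic_number V1 EW"
    have "\<exists>f. proper_coloring V1 EW f \<and> f ` V1 \<subseteq> {1..?k}"
      unfolding chromatic_number_def
      by (rule LeastI[of _ m], rule exI[of _ \<sigma>]) (use propW img in simp)
    then obtain f where f: "proper_coloring V1 EW f" "f ` V1 \<subseteq> {1..?k}" by blast
    have fE: "proper_coloring V1 E f" using f(1) adjW unfolding proper_coloring_def by blast
    have wgs: "wg V1 E \<sigma>"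
      unfolding wg_def
    proof (intro conjI ballI impI)
      show "proper_coloring V1 E \<sigma>" using G(1) sub unfolding proper_coloring_def by blast
    next
      fix v c assume v: "v \<in> V1" and c: "c \<in> \<sigma> ` V1" "c < \<sigma> v"
      then have "1 \<le> c" using img by auto
      moreover have "v \<in> V" using v sub by blast
      ultimately obtain u where "u \<in> V" "adj E v u" "\<sigma> u = c" using G(3)[of v c] c by blast
      then show "\<exists>u\<in>V1. adj E v u \<and> \<sigma> u = c" using closed v by blast
    qed
    have "card (\<sigma> ` V1) \<le> card (f ` V1)" using key[OF assms(1) sub wgs fE] .
    also have "\<dots> \<le> card {1..?k}" using f(2) by (intro card_mono) simp_all
    finally show ?thesis using img by simp
  qed
  ultimately have meq: "m = chromatic_number V1 EW" by linarith
  have "\<sigma> ` V1 = {1..chromatic_number V1 EW}" using img meq by (simp only:)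
  then show ?thesis unfolding EW_def .
qed

end
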